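(* Let $\ell$ be a positive odd integer with at most $t$ distinct prime factors. Suppose that for $i=1,\dots,s$ there are primes $p_{i,1}<p_{i,2}<\cdots<p_{i,t+1}$ with $p_{i,1}\ge 3$, such that for each $i$ any two of $p_{i,1}-1,\dots,p_{i,t+1}-1$ have no common odd prime factor, and such that $p_{i+1,t+1}<2p_{i,1}$ for $1\le i\le s-1$. Then for every integer $n$ with $p_{1,t+1}-1\le n\le 2p_{s,1}-2$, $\Omega_\ell(n)$ is not a powerful number.
   Context: A positive integer $a$ is called a powerful number if for every prime $p$, $p\mid a$ implies $p^2\mid a$. $\Omega_\ell(n)=\prod_{a=1}^{n}(a^\ell+1)$. *)

theory Defs
  imports "HOL-Computational_Algebra.Primes"
begin

definition powerful :: "nat \<Rightarrow> bool" where
  "powerful a \<longleftrightarrow> a > 0 \<and> (\<forall>p. prime p \<and> p dvd a \<longrightarrow> p^2 dvd a)"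

definition Omega :: "nat \<Rightarrow> nat \<Rightarrow> nat" where
  "Omega l n = (\<Prod>a=1..n. a ^ l + 1)"

end

theory Submission
  imports Defs "HOL-Number_Theory.Number_Theory"
begin

lemma lemA:
  fixes x :: int
  shows "x^2 dvd (1 - x)^k - (1 - int k * x)"
proof (induction k)
  case 0 then show ?case by simp
next
  case (Suc k)
  then obtain m where m: "(1 - x)^k = 1 - int k * x + x^2 * m" by (metis dvd_def diff_eq_eq add.commute)
  have "(1 - x)^Suc k - (1 - int (Suc k) * x) = x^2 * (int k + (1 - x) * m)"
    by (simp add: m power2_eq_square algebra_simps)
  then show ?case by simp
qed

lemma lemA2:
  fixes q l :: nat
  assumes "prime q" "odd l" "\<not> q dvd l"
  shows "\<not> q^2 dvd (q - 1)^l + 1"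
proof
  assume h: "q^2 dvd (q - 1)^l + 1"
  have q1: "q \<ge> 1" using assms prime_ge_1_nat by blast
  have "int ((q - 1)^l + 1) = (int q - 1)^l + 1" using q1 by (simp add: of_nat_diff)
  also have "(int q - 1)^l = - ((1 - int q)^l)"
    using assms(2) by (metis minus_diff_eq power_minus_odd)
  finally have e: "int ((q - 1)^l + 1) = 1 - (1 - int q)^l" by simp
  obtain m where m: "(1 - int q)^l - (1 - int l * int q) = (int q)^2 * m"
    using lemA[of "int q" l] by (auto simp: dvd_def)
  have "(int q)^2 dvd int ((q - 1)^l + 1)" using h by (metis of_nat_dvd_iff of_nat_power)
  moreover have "int ((q - 1)^l + 1) = int l * int q - (int q)^2 * m" unfolding e using m by linarith
  ultimately have "(int q)^2 dvd int l * int q - (int q)^2 * m" by simp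
  hence "(int q)^2 dvd (int l * int q - (int q)^2 * m) + (int q)^2 * m" by (rule dvd_add) simp
  hence "(int q)^2 dvd int l * int q" by simp
  hence "int q * int q dvd int l * int q" by (simp add: power2_eq_square)
  hence "int q dvd int l" using q1 by (simp add: mult.commute)
  thus False using assms(3) by simp
qed

lemma lemB:
  fixes q l a :: nat
  assumes "prime q" "odd q" "odd l" "coprime l (q - 1)" "q dvd a^l + 1"
  shows "q dvd a + 1"
proof -
  have l0: "l \<noteq> 0" using assms(3) by (metis odd_pos less_irrefl)
  have na: "\<not> q dvd a"
  proof
    assume "q dvd a" hence "q dvd a^l" using l0 by (meson dvd_power dvd_trans gr0I)
    hence "q dvd 1" using assms(5) by (metis dvd_add_right_iff)
    thus False using assms(1) by simp
  qed
  obtain u v where uv: "l * u = (q - 1) * v + gcd l (q - 1)" using bezout_nat[OF l0] by blast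
  hence uv: "l * u = (q - 1) * v + 1" using assms(4) by simp
  have "[a^(q-1) = 1] (mod q)" using fermat_theorem[OF assms(1) na] .
  hence "[(a^(q-1))^v * a = 1^v * a] (mod q)" by (intro cong_mult cong_pow) auto
  moreover have "a^(l*u) = (a^(q-1))^v * a" by (simp only: uv power_add power_mult power_one_right)
  ultimately have c1: "[a^(l*u) = a] (mod q)" by simp
  hence c1: "[(int a)^(l*u) = int a] (mod int q)" by (metis cong_int_iff of_nat_power)
  have "q dvd a^l + 1" by fact
  hence "int q dvd (int a)^l - (-1)" by (metis diff_minus_eq_add of_nat_1 of_nat_add of_nat_dvd_iff of_nat_power)
  hence "[(int a)^l = -1] (mod int q)" by (simp add: cong_iff_dvd_diff)
  hence "[((int a)^l)^u = (-1)^u] (mod int q)" by (rule cong_pow)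
  moreover have "odd u"
  proof -
    have "even (q - 1)" using assms(2) by simp
    hence "odd (l*u)" using uv by simp
    thus ?thesis by simp
  qed
  ultimately have "[(int a)^(l*u) = -1] (mod int q)" by (simp add: power_mult)
  hence "[int a = -1] (mod int q)" using c1 by (metis cong_sym cong_trans)
  hence "int q dvd int a + 1" by (simp add: cong_iff_dvd_diff)
  thus ?thesis by (metis of_nat_1 of_nat_add of_nat_dvd_iff)
qed

lemma lemC:
  fixes q l n :: nat
  assumes q: "prime q" "odd q" and l: "odd l" "coprime l (q - 1)" "\<not> q dvd l"
    and n: "q - 1 \<le> n" "n \<le> 2*q - 2" and q3: "q \<ge> 3"
  shows "q dvd Omega l n \<and> \<not> q^2 dvd Omega l n"
proof -
  have mem: "q - 1 \<in> {1..n}" using n q3 by auto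
  have om: "Omega l n = ((q-1)^l+1) * (\<Prod>a\<in>{1..n}-{q-1}. a^l+1)"
    unfolding Omega_def using mem by (simp add: prod.remove)
  have nd: "\<not> q dvd (\<Prod>a\<in>{1..n}-{q-1}. a^l+1)"
  proof
    assume asm: "q dvd (\<Prod>a\<in>{1..n}-{q-1}. a^l+1)"
    have "\<exists>a\<in>{1..n}-{q-1}. q dvd a^l+1"
      using prime_dvd_prod_iff[of "{1..n}-{q-1}" q "\<lambda>a. a^l+1"] q(1) asm by simp
    then obtain a where a: "a \<in> {1..n}-{q-1}" "q dvd a^l+1" by blast
    have an: "a \<le> n" "a \<noteq> q - 1" using a(1) by auto
    have "q dvd a + 1" using lemB[OF q l(1,2) a(2)] .
    then obtain k where k: "a + 1 = q * k" by (auto simp: dvd_def)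
    have "k \<noteq> 0" using k by (metis add_is_0 mult_0_right one_neq_zero)
    moreover have "k < 2"
    proof (rule ccontr)
      assume "\<not> k < 2" hence "q * 2 \<le> q * k" by simp
      thus False using k an n q3 by linarith
    qed
    ultimately have "k = 1" by auto
    thus False using k an q3 by simp
  qed
  have d1: "q dvd (q-1)^l+1"
  proof -
    have "[int (q-1) = -1] (mod int q)" using q3 by (simp add: cong_iff_dvd_diff of_nat_diff)
    hence "[int (q-1)^l = (-1)^l] (mod int q)" by (rule cong_pow)
    hence "[int (q-1)^l = -1] (mod int q)" using l(1) by simp
    hence "int q dvd int (q-1)^l + 1" by (simp add: cong_iff_dvd_diff)
    thus ?thesis by (metis of_nat_1 of_nat_add of_nat_dvd_iff of_nat_power)
  qed
  have cp: "coprime (q^2) (\<Prod>a\<in>{1..n}-{q-1}. a^l+1)"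
    using prime_imp_coprime[OF q(1) nd] by simp
  have "\<not> q^2 dvd Omega l n"
    unfolding om by (subst coprime_dvd_mult_left_iff[OF cp]) (rule lemA2[OF q(1) l(1) l(3)])
  moreover have "q dvd Omega l n" unfolding om using d1 by (rule dvd_mult2)
  ultimately show ?thesis by simp
qed

theorem lemma5:
  fixes l t s :: nat and p :: "nat \<Rightarrow> nat \<Rightarrow> nat"
  assumes l_pos: "l > 0" and l_odd: "odd l"
    and l_factors: "card (prime_factors l) \<le> t"
    and s_pos: "s \<ge> 1"
    and p_prime: "\<And>i j. i \<in> {1..s} \<Longrightarrow> j \<in> {1..t+1} \<Longrightarrow> prime (p i j)"
    and p_incr: "\<And>i j. i \<in> {1..s} \<Longrightarrow> j \<in> {1..t} \<Longrightarrow> p i j < p i (j+1)"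
    and p_ge3: "\<And>i. i \<in> {1..s} \<Longrightarrow> p i 1 \<ge> 3"
    and p_cop: "\<And>i j k q. i \<in> {1..s} \<Longrightarrow> j \<in> {1..t+1} \<Longrightarrow> k \<in> {1..t+1} \<Longrightarrow> j \<noteq> k
                 \<Longrightarrow> prime q \<Longrightarrow> odd q \<Longrightarrow> \<not> (q dvd p i j - 1 \<and> q dvd p i k - 1)"
    and p_chain: "\<And>i. i \<in> {1..s-1} \<Longrightarrow> p (i+1) (t+1) < 2 * p i 1"
  shows "\<forall>n::nat. p 1 (t+1) - 1 \<le> n \<and> n \<le> 2 * p s 1 - 2 \<longrightarrow> \<not> powerful (Omega l n)"
proof (intro allI impI)
  fix n assume nr: "p 1 (t+1) - 1 \<le> n \<and> n \<le> 2 * p s 1 - 2"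
  have mono0: "p i j + d \<le> p i (j+d)" if "i \<in> {1..s}" "1 \<le> j" "j + d \<le> t+1" for i j d
    using that(3)
  proof (induction d)
    case 0 then show ?case by simp
  next
    case (Suc d)
    hence "p i j + d \<le> p i (j+d)" by simp
    moreover have "p i (j+d) < p i (j+d+1)" using p_incr[OF that(1)] Suc.prems that(2) by simp
    ultimately show ?case by simp
  qed
  have smono: "p i j < p i k" if "i \<in> {1..s}" "j \<in> {1..t+1}" "k \<in> {1..t+1}" "j < k" for i j k
    using mono0[OF that(1), of j "k - j"] that by auto
  have wmono: "p i j \<le> p i k" if "i \<in> {1..s}" "j \<in> {1..t+1}" "k \<in> {1..t+1}" "j \<le> k" for i j k
    using smono[OF that(1-3)] that(4) by (cases "j = k") auto
  define S where "S = {i \<in> {1..s}. p i (t+1) - 1 \<le> n}"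
  have finS: "finite S" unfolding S_def by simp
  have "1 \<in> S" unfolding S_def using nr s_pos by simp
  hence neS: "S \<noteq> {}" by auto
  define i where "i = Max S"
  have iS: "i \<in> S" unfolding i_def using Max_in[OF finS neS] .
  hence irange: "i \<in> {1..s}" and ilow: "p i (t+1) - 1 \<le> n" unfolding S_def by auto
  have ihigh: "n \<le> 2 * p i 1 - 2"
  proof (rule ccontr)
    assume hn: "\<not> n \<le> 2 * p i 1 - 2"
    have "i \<noteq> s" using hn nr by auto
    hence "i \<in> {1..s-1}" using irange by auto
    hence "p (i+1) (t+1) < 2 * p i 1" by (rule p_chain)
    hence "p (i+1) (t+1) - 1 \<le> n" using hn by linarith
    hence "i + 1 \<in> S" unfolding S_def using \<open>i \<noteq> s\<close> irange by auto
    hence "i + 1 \<le> i" unfolding i_def using Max_ge[OF finS] by blast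
    thus False by simp
  qed
  have q1ge: "p i 1 \<ge> 3" using p_ge3[OF irange] .
  have qbound: "p i j \<le> 2 * p i 1 - 1" if "j \<in> {1..t+1}" for j
    using wmono[OF irange that, of "t+1"] that ilow ihigh q1ge by simp
  have qlow: "p i 1 \<le> p i j" if "j \<in> {1..t+1}" for j
    using wmono[OF irange _ that, of 1] that by auto
  have qodd: "odd (p i j)" if "j \<in> {1..t+1}" for j
    using prime_odd_nat[OF p_prime[OF irange that]] qlow[OF that] q1ge by auto
  \<comment> \<open>pigeonhole\<close>
  have "\<exists>j\<in>{1..t+1}. coprime l (p i j - 1) \<and> \<not> p i j dvd l"
  proof (rule ccontr)
    assume H: "\<not> ?thesis"
    define P where "P = (\<lambda>j r. prime r \<and> r dvd l \<and> (r dvd p i j - 1 \<or> r = p i j))"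
    have ex: "\<exists>r. P j r" if "j \<in> {1..t+1}" for j
    proof (cases "coprime l (p i j - 1)")
      case True
      hence "p i j dvd l" using H that by blast
      thus ?thesis unfolding P_def using p_prime[OF irange that] by blast
    next
      case False
      hence "gcd l (p i j - 1) \<noteq> 1" using coprime_iff_gcd_eq_1 by blast
      then obtain r where r: "prime r" "r dvd gcd l (p i j - 1)" using prime_factor_nat[of "gcd l (p i j - 1)"] by blast
      have "r dvd l" "r dvd p i j - 1" using r(2) by (meson dvd_trans gcd_dvd1 gcd_dvd2)+
      thus ?thesis unfolding P_def using r(1) by blast
    qed
    define f where "f = (\<lambda>j. SOME r. P j r)"
    have fP: "P j (f j)" if "j \<in> {1..t+1}" for j
      unfolding f_def using someI_ex[OF ex[OF that]] .
    have img: "f ` {1..t+1} \<subseteq> prime_factors l"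
    proof
      fix r assume "r \<in> f ` {1..t+1}"
      then obtain j where j: "j \<in> {1..t+1}" "r = f j" by blast
      have "prime r" "r dvd l" using fP[OF j(1)] j(2) unfolding P_def by simp_all
      thus "r \<in> prime_factors l" using l_pos by (simp add: in_prime_factors_iff)
    qed
    have noway: False if hj: "j \<in> {1..t+1}" and hk: "k \<in> {1..t+1}" and hd: "p i k dvd p i j - 1" for j k
    proof -
      have pk3: "p i k \<ge> 3" using qlow[OF hk] q1ge by simp
      have pj3: "p i j \<ge> 3" using qlow[OF hj] q1ge by simp
      obtain c where c: "p i j - 1 = p i k * c" using hd by (auto simp: dvd_def)
      have "c \<noteq> 0"
      proof
        assume "c = 0" hence "p i j - 1 = 0" using c by simp
        thus False using pj3 by simp
      qed
      moreover have "c < 2"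
      proof (rule ccontr)
        assume "\<not> c < 2" hence "p i k * 2 \<le> p i k * c" by simp
        thus False using c qbound[OF hj] qlow[OF hk] q1ge by linarith
      qed
      ultimately have "c = 1" by simp
      hence "p i j = p i k + 1" using c pj3 by simp
      thus False using qodd[OF hj] qodd[OF hk] by simp
    qed
    have inj: "inj_on f {1..t+1}"
    proof (rule inj_onI)
      fix j k assume j: "j \<in> {1..t+1}" and k: "k \<in> {1..t+1}" and e: "f j = f k"
      show "j = k"
      proof (rule ccontr)
        assume jk: "j \<noteq> k"
        let ?r = "f j"
        have Pj: "P j ?r" using fP[OF j] .
        have Pk: "P k ?r" using fP[OF k] e by simp
        have rodd: "odd ?r" using Pj l_odd unfolding P_def by (meson dvd_trans)
        have rpr: "prime ?r" using Pj unfolding P_def by simp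
        consider "?r dvd p i j - 1" "?r dvd p i k - 1" | "?r dvd p i j - 1" "?r = p i k"
          | "?r = p i j" "?r dvd p i k - 1" | "?r = p i j" "?r = p i k"
          using Pj Pk unfolding P_def by blast
        thus False
        proof cases
          case 1 thus False using p_cop[OF irange j k jk rpr rodd] by blast
        next
          case 2 thus False using noway[OF j k] by simp
        next
          case 3 thus False using noway[OF k j] by simp
        next
          case 4
          hence "p i j = p i k" by simp
          moreover have "p i j \<noteq> p i k" using jk smono[OF irange j k] smono[OF irange k j]
            by (cases "j < k") auto
          ultimately show False by simp
        qed
      qed
    qed
    have "card {1..t+1} \<le> card (prime_factors l)"
      using card_inj_on_le[OF inj img] by simp
    thus False using l_factors by simp
  qed
  then obtain j where j: "j \<in> {1..t+1}" "coprime l (p i j - 1)" "\<not> p i j dvd l" by blast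
  have q3: "p i j \<ge> 3" using qlow[OF j(1)] q1ge by simp
  have nlo: "p i j - 1 \<le> n" using wmono[OF irange j(1), of "t+1"] j(1) ilow by auto
  have nhi: "n \<le> 2 * p i j - 2" using qlow[OF j(1)] ihigh by linarith
  have res: "p i j dvd Omega l n \<and> \<not> (p i j)^2 dvd Omega l n"
    using lemC[OF p_prime[OF irange j(1)] qodd[OF j(1)] l_odd j(2) j(3) nlo nhi q3] .
  show "\<not> powerful (Omega l n)"
    unfolding powerful_def using res p_prime[OF irange j(1)] by blast
qed

end
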